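(* Let $m\ge 4$ and let $K\ne\Delta_{[m]}$ be a simplicial complex on $[m]$. Then $\mathrm{Bier}(K)$ is chordal if and only if $K$ contains no edges or $K^\vee$ contains no edges.
   Context: A simplicial complex $K$ on $[m]=\{1,\dots,m\}$ is a nonempty family of subsets of $[m]$ closed under taking subsets; an edge is a face of cardinality $2$. $\Delta_{[m]}=2^{[m]}$. Let $[m']=\{1',\dots,m'\}$ be a disjoint copy of $[m]$, $I'=\{i':i\in I\}$. For $K\ne\Delta_{[m]}$ the Alexander dual $K^\vee$ is the complex on $[m']$ with $J'\in K^\vee$ iff $[m]\setminus J\notin K$. The Bier sphere $\mathrm{Bier}(K)$ is the complex on $[m]\sqcup[m']$ with faces $I\sqcup J'$, $I\in K$, $J'\in K^\vee$, $I\cap J=\varnothing$. A graph is chordal if it has no induced cycle of length greater than $3$; a simplicial complex is chordal if its 1-skeleton is a chordal graph. *)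

theory Defs
  imports Main
begin

definition simplicial_complex :: "nat \<Rightarrow> nat set set \<Rightarrow> bool" where
  "simplicial_complex m K \<longleftrightarrow>
     K \<noteq> {} \<and> (\<forall>\<sigma>\<in>K. \<sigma> \<subseteq> {1..m}) \<and> (\<forall>\<sigma>\<in>K. \<forall>\<tau>. \<tau> \<subseteq> \<sigma> \<longrightarrow> \<tau> \<in> K)"

definition full_simplex :: "nat \<Rightarrow> nat set set" where
  "full_simplex m = Pow {1..m}"

text \<open>Alexander dual, represented on the copy [m'] of [m] (identified with {1..m}
via J' \<leftrightarrow> J): J' is a face iff [m] - J is not a face of K.\<close>
definition alexander_dual :: "nat \<Rightarrow> nat set set \<Rightarrow> nat set set" where
  "alexander_dual m K = {J. J \<subseteq> {1..m} \<and> {1..m} - J \<notin> K}"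

text \<open>Bier sphere on [m] \<squnion> [m']: vertex i of [m] is Inl i, vertex i' of [m'] is Inr i.\<close>
definition bier :: "nat \<Rightarrow> nat set set \<Rightarrow> (nat + nat) set set" where
  "bier m K = {Inl ` I \<union> Inr ` J | I J. I \<in> K \<and> J \<in> alexander_dual m K \<and> I \<inter> J = {}}"

definition has_edge :: "'a set set \<Rightarrow> bool" where
  "has_edge X \<longleftrightarrow> (\<exists>\<sigma>\<in>X. card \<sigma> = 2)"

definition adjacent :: "'a set set \<Rightarrow> 'a \<Rightarrow> 'a \<Rightarrow> bool" where
  "adjacent X u v \<longleftrightarrow> u \<noteq> v \<and> {u, v} \<in> X"

definition induced_cycle :: "'a set set \<Rightarrow> 'a list \<Rightarrow> bool" where
  "induced_cycle X cs \<longleftrightarrow> length cs \<ge> 3 \<and> distinct cs \<and>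
     (\<forall>i<length cs. \<forall>j<length cs.
        adjacent X (cs!i) (cs!j) \<longleftrightarrow>
          (j = Suc i mod length cs \<or> i = Suc j mod length cs))"

definition chordal :: "'a set set \<Rightarrow> bool" where
  "chordal X \<longleftrightarrow> \<not> (\<exists>cs. induced_cycle X cs \<and> length cs > 3)"

end

theory Submission imports Defs begin

lemma all4: "(\<forall>i<(4::nat). P i) = (P 0 \<and> P 1 \<and> P 2 \<and> P 3)"
  by (auto simp: numeral_eq_Suc less_Suc_eq)

lemma adj_sym: "adjacent X u v = adjacent X v u"
  by (auto simp: adjacent_def insert_commute)

lemma c4:
  assumes "distinct [a,b,c,d]" "adjacent X a b" "adjacent X b c" "adjacent X c d" "adjacent X d a"
    "\<not> adjacent X a c" "\<not> adjacent X b d"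
  shows "\<not> chordal X"
proof -
  have s: "adjacent X b a" "adjacent X c b" "adjacent X d c" "adjacent X a d"
    "\<not> adjacent X c a" "\<not> adjacent X d b" using assms adj_sym by metis+
  have i: "\<And>u. \<not> adjacent X u u" by (simp add: adjacent_def)
  have "induced_cycle X [a,b,c,d]"
    unfolding induced_cycle_def using assms s i by (auto simp: less_Suc_eq)
  then show ?thesis unfolding chordal_def by fastforce
qed

lemma bier_mem: "Inl ` I \<union> Inr ` J \<in> bier m K \<longleftrightarrow> I \<in> K \<and> J \<in> alexander_dual m K \<and> I \<inter> J = {}"
proof
  assume "Inl ` I \<union> Inr ` J \<in> bier m K"
  then obtain I' J' where e: "Inl ` I \<union> Inr ` J = Inl ` I' \<union> Inr ` J'" and h: "I' \<in> K" "J' \<in> alexander_dual m K" "I' \<inter> J' = {}"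
    unfolding bier_def by blast
  have "I = I'" using e by (auto simp: set_eq_iff image_iff)
  moreover have "J = J'" using e by (auto simp: set_eq_iff image_iff)
  ultimately show "I \<in> K \<and> J \<in> alexander_dual m K \<and> I \<inter> J = {}" using h by simp
qed (auto simp: bier_def)

abbreviation D where "D m K \<equiv> alexander_dual m K"

lemma sc_down: "simplicial_complex m K \<Longrightarrow> \<sigma> \<in> K \<Longrightarrow> \<tau> \<subseteq> \<sigma> \<Longrightarrow> \<tau> \<in> K"
  unfolding simplicial_complex_def by blast
lemma sc_sub: "simplicial_complex m K \<Longrightarrow> \<sigma> \<in> K \<Longrightarrow> \<sigma> \<subseteq> {1..m}"
  unfolding simplicial_complex_def by blast
lemma empty_K: "simplicial_complex m K \<Longrightarrow> {} \<in> K"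
  unfolding simplicial_complex_def by blast
lemma top_notin: "simplicial_complex m K \<Longrightarrow> K \<noteq> full_simplex m \<Longrightarrow> {1..m} \<notin> K"
proof
  assume a: "simplicial_complex m K" "K \<noteq> full_simplex m" "{1..m} \<in> K"
  have "K = Pow {1..m}" using sc_down[OF a(1) a(3)] sc_sub[OF a(1)] by blast
  then show False using a(2) by (simp add: full_simplex_def)
qed
lemma D_down: "simplicial_complex m K \<Longrightarrow> J \<in> D m K \<Longrightarrow> J' \<subseteq> J \<Longrightarrow> J' \<in> D m K"
  unfolding alexander_dual_def using sc_down[of m K "{1..m} - J'" "{1..m} - J"] by blast
lemma D_sub: "J \<in> D m K \<Longrightarrow> J \<subseteq> {1..m}"
  unfolding alexander_dual_def by blast
lemma empty_D: "simplicial_complex m K \<Longrightarrow> K \<noteq> full_simplex m \<Longrightarrow> {} \<in> D m K"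
  using top_notin unfolding alexander_dual_def by simp

lemma adjLL: "simplicial_complex m K \<Longrightarrow> K \<noteq> full_simplex m \<Longrightarrow>
   adjacent (bier m K) (Inl i) (Inl j) \<longleftrightarrow> i \<noteq> j \<and> {i,j} \<in> K"
proof -
  have "{Inl i, Inl j} = Inl ` {i,j} \<union> Inr ` {}" by simp
  then show "simplicial_complex m K \<Longrightarrow> K \<noteq> full_simplex m \<Longrightarrow> ?thesis"
    using bier_mem[of "{i,j}" "{}" m K] empty_D[of m K] by (simp add: adjacent_def)
qed
lemma adjRR: "simplicial_complex m K \<Longrightarrow>
   adjacent (bier m K) (Inr i) (Inr j) \<longleftrightarrow> i \<noteq> j \<and> {i,j} \<in> D m K"
proof -
  have "{Inr i, Inr j} = Inl ` {} \<union> Inr ` {i,j}" by simp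
  then show "simplicial_complex m K \<Longrightarrow> ?thesis"
    using bier_mem[of "{}" "{i,j}" m K] empty_K[of m K] by (simp add: adjacent_def)
qed
lemma adjLR: "adjacent (bier m K) (Inl i) (Inr j) \<longleftrightarrow> i \<noteq> j \<and> {i} \<in> K \<and> {j} \<in> D m K"
proof -
  have "{Inl i, Inr j} = Inl ` {i} \<union> Inr ` {j}" by auto
  then show ?thesis
    using bier_mem[of "{i}" "{j}" m K] by (auto simp add: adjacent_def)
qed
lemma adjRL: "adjacent (bier m K) (Inr j) (Inl i) \<longleftrightarrow> i \<noteq> j \<and> {i} \<in> K \<and> {j} \<in> D m K"
  using adjLR adj_sym by metis

lemma no_long_cycle:
  assumes ic: "induced_cycle X cs" and len: "length cs > 3"
    and indep: "\<And>u v. u \<in> set cs \<Longrightarrow> v \<in> set cs \<Longrightarrow> P u \<Longrightarrow> P v \<Longrightarrow> \<not> adjacent X u v"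
    and cl: "\<And>u v. u \<in> set cs \<Longrightarrow> v \<in> set cs \<Longrightarrow> \<not> P u \<Longrightarrow> \<not> P v \<Longrightarrow> u \<noteq> v \<Longrightarrow> adjacent X u v"
  shows False
proof -
  define n where "n = length cs"
  have n: "n > 3" using len n_def by simp
  have dist: "distinct cs" using ic unfolding induced_cycle_def by simp
  have A: "\<And>i j. i < n \<Longrightarrow> j < n \<Longrightarrow> adjacent X (cs!i) (cs!j) \<longleftrightarrow> (j = Suc i mod n \<or> i = Suc j mod n)"
    using ic unfolding induced_cycle_def n_def by blast
  have inset: "\<And>i. i < n \<Longrightarrow> cs!i \<in> set cs" using n_def by simp
  have neq: "\<And>i j. i < n \<Longrightarrow> j < n \<Longrightarrow> i \<noteq> j \<Longrightarrow> cs!i \<noteq> cs!j"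
    using dist n_def nth_eq_iff_index_eq by blast
  have m4: "4 mod n = 0 \<or> 4 mod n = 4" using n
    by (metis less_Suc_eq mod_less mod_self not_less_eq numeral_eq_Suc pred_numeral_simps(2) semiring_norm(26) semiring_norm(27))
  have a01: "adjacent X (cs!0) (cs!1)" using A[of 0 1] n by simp
  have a12: "adjacent X (cs!1) (cs!2)" using A[of 1 2] n by simp
  have a23: "adjacent X (cs!2) (cs!3)" using A[of 2 3] n by simp
  have a0n: "adjacent X (cs!0) (cs!(n-1))" using A[of 0 "n-1"] n by simp
  have n02: "\<not> adjacent X (cs!0) (cs!2)" using A[of 0 2] n by simp
  have n13: "\<not> adjacent X (cs!1) (cs!3)" using A[of 1 3] n m4 by auto
  have n1n: "\<not> adjacent X (cs!1) (cs!(n-1))" using A[of 1 "n-1"] n by simp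
  show False
  proof (cases "P (cs!0)")
    case True
    have "\<not> P (cs!1)" using indep[OF inset inset True] a01 n by auto
    moreover have "\<not> P (cs!(n-1))" using indep[OF inset inset True] a0n n by auto
    ultimately show False using cl[OF inset inset] neq[of 1 "n-1"] n n1n by auto
  next
    case False
    have "P (cs!2)"
    proof (rule ccontr)
      assume "\<not> P (cs!2)"
      then have "adjacent X (cs!0) (cs!2)" using cl[OF inset[of 0] inset[of 2] False] neq[of 0 2] n by simp
      then show False using n02 by simp
    qed
    have "\<not> P (cs!1)" using indep[OF inset[of 1] inset[of 2]] \<open>P (cs!2)\<close> a12 n by auto
    moreover have "\<not> P (cs!3)" using indep[OF inset[of 2] inset[of 3]] \<open>P (cs!2)\<close> a23 n by auto
    ultimately show False using cl[OF inset inset] neq[of 1 3] n n13 by auto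
  qed
qed

lemma two_elems: "finite S \<Longrightarrow> card S \<ge> 2 \<Longrightarrow> \<exists>x\<in>S. \<exists>y\<in>S. x \<noteq> y"
  using card_le_Suc0_iff_eq[of S] by auto

lemma card_m2: "i \<in> {1..m} \<Longrightarrow> j \<in> {1..m} \<Longrightarrow> i \<noteq> j \<Longrightarrow> card ({1..m::nat} - {i,j}) = m - 2"
  by (subst card_Diff_subset) auto

lemma big_face_edge: "simplicial_complex m K \<Longrightarrow> \<sigma> \<in> K \<Longrightarrow> finite \<sigma> \<Longrightarrow> card \<sigma> \<ge> 2 \<Longrightarrow> has_edge K"
proof -
  assume a: "simplicial_complex m K" "\<sigma> \<in> K" "finite \<sigma>" "card \<sigma> \<ge> 2"
  then obtain x y where "x \<in> \<sigma>" "y \<in> \<sigma>" "x \<noteq> y" using two_elems by blast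
  then have "{x,y} \<in> K" "card {x,y} = 2" using sc_down[OF a(1) a(2)] by auto
  then show ?thesis unfolding has_edge_def by blast
qed

lemma cyc_nb: "induced_cycle X cs \<Longrightarrow> u \<in> set cs \<Longrightarrow> \<exists>v. adjacent X u v"
proof -
  assume ic: "induced_cycle X cs" "u \<in> set cs"
  then obtain i where i: "i < length cs" "u = cs!i" by (metis in_set_conv_nth)
  have "length cs > 0" using i by (metis gr_zeroI less_zeroE)
  then have "Suc i mod length cs < length cs" by simp
  then have "adjacent X (cs!i) (cs!(Suc i mod length cs))" using ic i unfolding induced_cycle_def by blast
  then show ?thesis using i by blast
qed

lemma vert_range: "simplicial_complex m K \<Longrightarrow> adjacent (bier m K) u w \<Longrightarrow>
   (\<exists>i. u = Inl i \<and> i \<in> {1..m}) \<or> (\<exists>i. u = Inr i \<and> i \<in> {1..m})"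
proof -
  assume sc: "simplicial_complex m K" and "adjacent (bier m K) u w"
  then have "{u, w} \<in> bier m K" by (simp add: adjacent_def)
  then obtain I J where e: "{u, w} = Inl ` I \<union> Inr ` J" and h: "I \<in> K" "J \<in> D m K"
    unfolding bier_def by blast
  have "u \<in> Inl ` I \<union> Inr ` J" using e by blast
  then show ?thesis using sc_sub[OF sc h(1)] D_sub[OF h(2)] by blast
qed

lemma inR:
  assumes sc: "simplicial_complex m K" and nT1: "\<forall>i j. i \<noteq> j \<longrightarrow> {i,j} \<in> K \<longrightarrow> {i,j} \<notin> D m K"
    and ab: "{a,b} \<in> K" and cd: "{c,d} \<in> D m K" "c \<noteq> d"
  shows "{a} \<in> D m K"
proof (rule ccontr)
  assume na: "{a} \<notin> D m K"
  have am: "a \<in> {1..m}" using sc_sub[OF sc ab] by auto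
  then have big: "{1..m} - {a} \<in> K" using na unfolding alexander_dual_def by auto
  show False
  proof (cases "a \<in> {c,d}")
    case True
    then have "{a} \<subseteq> {c,d}" by auto
    then show False using D_down[OF sc cd(1)] na by blast
  next
    case False
    then have "{c,d} \<subseteq> {1..m} - {a}" using D_sub[OF cd(1)] by auto
    then have "{c,d} \<in> K" using sc_down[OF sc big] by blast
    then show False using nT1 cd by blast
  qed
qed

lemma inL:
  assumes sc: "simplicial_complex m K" and nT1: "\<forall>i j. i \<noteq> j \<longrightarrow> {i,j} \<in> K \<longrightarrow> {i,j} \<notin> D m K"
    and ab: "{a,b} \<in> K" "a \<noteq> b" and cd: "{c,d} \<in> D m K"
  shows "{c} \<in> K"
proof (rule ccontr)
  assume nc: "{c} \<notin> K"
  have cm: "c \<in> {1..m}" using D_sub[OF cd] by auto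
  then have "{1..m} - ({1..m} - {c}) = {c}" by auto
  then have big: "{1..m} - {c} \<in> D m K" using nc unfolding alexander_dual_def by auto
  show False
  proof (cases "c \<in> {a,b}")
    case True
    then have "{c} \<subseteq> {a,b}" by auto
    then show False using sc_down[OF sc ab(1)] nc by blast
  next
    case False
    then have "{a,b} \<subseteq> {1..m} - {c}" using sc_sub[OF sc ab(1)] by auto
    then have "{a,b} \<in> D m K" using D_down[OF sc big] by blast
    then show False using nT1 ab by blast
  qed
qed

lemma overlap:
  assumes sc: "simplicial_complex m K" and nf: "K \<noteq> full_simplex m" and m4: "m \<ge> 4"
    and nT1: "\<forall>i j. i \<noteq> j \<longrightarrow> {i,j} \<in> K \<longrightarrow> {i,j} \<notin> D m K"
    and xyK: "{x,y} \<in> K" and xzD: "{x,z} \<in> D m K" and d: "x \<noteq> y" "x \<noteq> z" "y \<noteq> z"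
  shows "\<not> chordal (bier m K)"
proof -
  note adj = adjLL[OF sc nf] adjRR[OF sc] adjLR adjRL
  have yD: "{y} \<in> D m K" using inR[OF sc nT1 _ xzD d(2), of y x] xyK by (simp add: insert_commute)
  have xD: "{x} \<in> D m K" using D_down[OF sc xzD] by auto
  have xK: "{x} \<in> K" and yK: "{y} \<in> K" using sc_down[OF sc xyK] by auto
  have zK: "{z} \<in> K" using inL[OF sc nT1 xyK d(1), of z x] xzD by (simp add: insert_commute)
  have zD: "{z} \<in> D m K" using D_down[OF sc xzD] by auto
  have xzK: "{x,z} \<notin> K" using nT1 xzD d by blast
  have xyD: "{x,y} \<notin> D m K" using nT1 xyK d by blast
  have e1: "{y,x} = {x,y}" and e2: "{z,x} = {x,z}" by auto
  have yxK: "{y,x} \<in> K" using xyK e1 by simp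
  have yxD: "{y,x} \<notin> D m K" using xyD e1 by simp
  have zxD: "{z,x} \<in> D m K" using xzD e2 by simp
  have mem: "x \<in> {1..m}" "y \<in> {1..m}" "z \<in> {1..m}" using sc_sub[OF sc xyK] D_sub[OF xzD] by auto
  show ?thesis
  proof (cases "{y,z} \<in> K")
    case True
    show ?thesis
      by (rule c4[of "Inr y" "Inl x" "Inl y" "Inl z"])
         (use True d xyK xzK xK yK zK yD xD zD in \<open>simp_all add: adj\<close>)
  next
    case nK: False
    show ?thesis
    proof (cases "{y,z} \<in> D m K")
      case True
      show ?thesis
        by (rule c4[of "Inl z" "Inr y" "Inr z" "Inr x"])
           (use True d xzD xyD zxD yxD xK yK zK yD xD zD in \<open>simp_all add: adj\<close>)
    next
      case False
      then have big: "{1..m} - {y,z} \<in> K" using mem unfolding alexander_dual_def by auto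
      have "card ({1..m} - {x,y,z}) = m - 3" using mem d by (subst card_Diff_subset) auto
      then have "card ({1..m} - {x,y,z}) > 0" using m4 by simp
      then have "{1..m} - {x,y,z} \<noteq> {}" by (metis card.empty less_irrefl)
      then obtain e where e: "e \<in> {1..m}" "e \<noteq> x" "e \<noteq> y" "e \<noteq> z" by blast
      have "{x,e} \<subseteq> {1..m} - {y,z}" using e mem d by auto
      then have xeK: "{x,e} \<in> K" using sc_down[OF sc big] by blast
      then have eK: "{e} \<in> K" using sc_down[OF sc xeK] by auto
      show ?thesis
      proof (cases "{y,e} \<in> K")
        case False
        show ?thesis
          by (rule c4[of "Inr x" "Inl y" "Inl x" "Inl e"])
             (use False d e xyK yxK xeK xK yK zK yD xD zD eK in \<open>simp_all add: adj\<close>)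
      next
        case True
        have eD: "{e} \<in> D m K"
        proof (rule ccontr)
          assume "{e} \<notin> D m K"
          then have "{1..m} - {e} \<in> K" using e unfolding alexander_dual_def by auto
          moreover have "{x,z} \<subseteq> {1..m} - {e}" using e mem by auto
          ultimately show False using sc_down[OF sc] xzK by blast
        qed
        have yeD: "{y,e} \<notin> D m K" using spec[OF spec[OF nT1, of y], of e] True e(3) by auto
        show ?thesis
          by (rule c4[of "Inl x" "Inr y" "Inl z" "Inr e"])
             (use yeD d e xzK xK yK zK yD xD zD eK eD in \<open>simp_all add: adj\<close>)
      qed
    qed
  qed
qed

lemma hard:
  assumes sc: "simplicial_complex m K" and nf: "K \<noteq> full_simplex m" and m4: "m \<ge> 4"
    and ab: "{a,b} \<in> K" "a \<noteq> b" and cd: "{c,d} \<in> D m K" "c \<noteq> d"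
  shows "\<not> chordal (bier m K)"
proof (cases "\<exists>i j. i \<noteq> j \<and> {i,j} \<in> K \<and> {i,j} \<in> D m K")
  note adj = adjLL[OF sc nf] adjRR[OF sc] adjLR adjRL
  case True
  then obtain i j where ij: "i \<noteq> j" "{i,j} \<in> K" "{i,j} \<in> D m K" by blast
  have "{i} \<in> K" "{j} \<in> K" using sc_down[OF sc ij(2)] by auto
  moreover have "{i} \<in> D m K" "{j} \<in> D m K" using D_down[OF sc ij(3)] by auto
  ultimately show ?thesis
    by (intro c4[of "Inl i" "Inl j" "Inr i" "Inr j"]) (use ij in \<open>simp_all add: adj\<close>)
next
  note adj = adjLL[OF sc nf] adjRR[OF sc] adjLR adjRL
  case False
  then have nT1: "\<forall>i j. i \<noteq> j \<longrightarrow> {i,j} \<in> K \<longrightarrow> {i,j} \<notin> D m K" by blast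
  have ov: "\<And>x y z. {x,y} \<in> K \<Longrightarrow> {x,z} \<in> D m K \<Longrightarrow> x \<noteq> y \<Longrightarrow> x \<noteq> z \<Longrightarrow> y \<noteq> z \<Longrightarrow> ?thesis"
    by (rule overlap[OF sc nf m4 nT1])
  have ba: "{b,a} \<in> K" and dc: "{d,c} \<in> D m K" using ab cd by (auto simp: insert_commute)
  show ?thesis
  proof (cases "{a,b} \<inter> {c,d} = {}")
    case True
    have "{a} \<in> D m K" using inR[OF sc nT1 ab(1) cd] .
    moreover have "{b} \<in> D m K" using inR[OF sc nT1 ba cd] .
    moreover have "{c} \<in> K" using inL[OF sc nT1 ab cd(1)] .
    moreover have "{d} \<in> K" using inL[OF sc nT1 ab dc] .
    moreover have "{c,d} \<notin> K" using nT1 cd by blast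
    moreover have "{a,b} \<notin> D m K" using nT1 ab by blast
    ultimately show ?thesis using True
      by (intro c4[of "Inl c" "Inr a" "Inl d" "Inr b"]) (use ab cd in \<open>simp_all add: adj\<close>)
  next
    case False
    have neq: "{a,b} \<noteq> {c,d}" using nT1 ab cd by metis
    from False have "a = c \<or> a = d \<or> b = c \<or> b = d" by auto
    then show ?thesis
    proof (elim disjE)
      assume e: "a = c"
      have "b \<noteq> d" using neq e by auto
      then show ?thesis using ov[of a b d] ab cd e by blast
    next
      assume e: "a = d"
      have "b \<noteq> c" using neq e by auto
      then show ?thesis using ov[of a b c] ab dc cd e by blast
    next
      assume e: "b = c"
      have "a \<noteq> d" using neq e by auto
      then show ?thesis using ov[of b a d] ba cd ab e by blast
    next
      assume e: "b = d"
      have "a \<noteq> c" using neq e by auto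
      then show ?thesis using ov[of b a c] ba dc ab cd e by blast
    qed
  qed
qed

theorem mainTheorem14:
  fixes m :: nat and K :: "nat set set"
  assumes "m \<ge> 4"
    and "simplicial_complex m K"
    and "K \<noteq> full_simplex m"
  shows "chordal (bier m K) \<longleftrightarrow>
           (\<not> has_edge K \<or> \<not> has_edge (alexander_dual m K))"
proof
  note sc = assms(2) and nf = assms(3) and m4 = assms(1)
  assume ch: "chordal (bier m K)"
  show "\<not> has_edge K \<or> \<not> has_edge (alexander_dual m K)"
  proof (rule ccontr)
    assume "\<not> (\<not> has_edge K \<or> \<not> has_edge (alexander_dual m K))"
    then obtain s t where "s \<in> K" "card s = 2" "t \<in> D m K" "card t = 2" unfolding has_edge_def by blast
    then obtain a b c d where "{a,b} \<in> K" "a \<noteq> b" "{c,d} \<in> D m K" "c \<noteq> d" by (metis card_2_iff)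
    then show False using hard[OF sc nf m4] ch by blast
  qed
next
  note sc = assms(2) and nf = assms(3) and m4 = assms(1)
  assume "\<not> has_edge K \<or> \<not> has_edge (alexander_dual m K)"
  then show "chordal (bier m K)"
  proof
    assume ne: "\<not> has_edge K"
    show ?thesis unfolding chordal_def
    proof
      assume "\<exists>cs. induced_cycle (bier m K) cs \<and> length cs > 3"
      then obtain cs where ic: "induced_cycle (bier m K) cs" "length cs > 3" by blast
      have vr: "\<And>u. u \<in> set cs \<Longrightarrow> (\<exists>i. u = Inl i \<and> i \<in> {1..m}) \<or> (\<exists>i. u = Inr i \<and> i \<in> {1..m})"
        using cyc_nb[OF ic(1)] vert_range[OF sc] by metis
      show False
      proof (rule no_long_cycle[OF ic, where P = "\<lambda>u. \<exists>i. u = Inl i"])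
        fix u v assume "u \<in> set cs" "v \<in> set cs" "\<exists>i. u = Inl i" "\<exists>i. v = Inl i"
        then obtain i j where ij: "u = Inl i" "v = Inl j" by blast
        show "\<not> adjacent (bier m K) u v"
        proof
          assume "adjacent (bier m K) u v"
          then have "i \<noteq> j" "{i,j} \<in> K" using adjLL[OF sc nf] ij by auto
          then show False using ne unfolding has_edge_def by fastforce
        qed
      next
        fix u v assume uv: "u \<in> set cs" "v \<in> set cs" "\<not>(\<exists>i. u = Inl i)" "\<not>(\<exists>i. v = Inl i)" "u \<noteq> v"
        then obtain i j where ij: "u = Inr i" "v = Inr j" "i \<in> {1..m}" "j \<in> {1..m}" using vr by blast
        have "i \<noteq> j" using ij uv by auto
        have "{1..m} - {i,j} \<notin> K"
        proof
          assume "{1..m} - {i,j} \<in> K"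
          then have "has_edge K" using big_face_edge[OF sc] card_m2[OF ij(3,4) \<open>i\<noteq>j\<close>] m4 by auto
          then show False using ne by simp
        qed
        then have "{i,j} \<in> D m K" using ij unfolding alexander_dual_def by auto
        then show "adjacent (bier m K) u v" using adjRR[OF sc] ij \<open>i\<noteq>j\<close> by simp
      qed
    qed
  next
    assume ne: "\<not> has_edge (D m K)"
    show ?thesis unfolding chordal_def
    proof
      assume "\<exists>cs. induced_cycle (bier m K) cs \<and> length cs > 3"
      then obtain cs where ic: "induced_cycle (bier m K) cs" "length cs > 3" by blast
      have vr: "\<And>u. u \<in> set cs \<Longrightarrow> (\<exists>i. u = Inl i \<and> i \<in> {1..m}) \<or> (\<exists>i. u = Inr i \<and> i \<in> {1..m})"
        using cyc_nb[OF ic(1)] vert_range[OF sc] by metis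
      show False
      proof (rule no_long_cycle[OF ic, where P = "\<lambda>u. \<exists>i. u = Inr i"])
        fix u v assume "u \<in> set cs" "v \<in> set cs" "\<exists>i. u = Inr i" "\<exists>i. v = Inr i"
        then obtain i j where ij: "u = Inr i" "v = Inr j" by blast
        show "\<not> adjacent (bier m K) u v"
        proof
          assume "adjacent (bier m K) u v"
          then have "i \<noteq> j" "{i,j} \<in> D m K" using adjRR[OF sc] ij by auto
          then show False using ne unfolding has_edge_def by fastforce
        qed
      next
        fix u v assume uv: "u \<in> set cs" "v \<in> set cs" "\<not>(\<exists>i. u = Inr i)" "\<not>(\<exists>i. v = Inr i)" "u \<noteq> v"
        then obtain i j where ij: "u = Inl i" "v = Inl j" "i \<in> {1..m}" "j \<in> {1..m}" using vr by blast
        have "i \<noteq> j" using ij uv by auto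
        have "card ({1..m} - {i,j}) \<ge> 2" using card_m2[OF ij(3,4) \<open>i\<noteq>j\<close>] m4 by auto
        then obtain x y where xy: "x \<in> {1..m} - {i,j}" "y \<in> {1..m} - {i,j}" "x \<noteq> y"
          using two_elems[of "{1..m} - {i,j}"] by blast
        have "{x,y} \<notin> D m K" using ne xy(3) unfolding has_edge_def by fastforce
        then have "{1..m} - {x,y} \<in> K" using xy unfolding alexander_dual_def by auto
        moreover have "{i,j} \<subseteq> {1..m} - {x,y}" using xy ij by auto
        ultimately have "{i,j} \<in> K" using sc_down[OF sc] by blast
        then show "adjacent (bier m K) u v" using adjLL[OF sc nf] ij \<open>i\<noteq>j\<close> by simp
      qed
    qed
  qed
qed

end
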